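(* Let $\Pi=((p_1,\dots,p_n),(P_1,\dots,P_n),(d_1,\dots,d_n))$ be an $n$-pod. (1) Suppose $\beta\in B_\Pi$ is an inversion (respectively similarity) bond of $\Pi$, with left and right vectors $L,R\in S^2$. Put $q_i=\pi_L(p_i)$ and $Q_i=\pi_R(P_i)$. Then there is an inversion (respectively similarity) from $L^\perp$ to $R^\perp$ mapping $q_i$ to $Q_i$ for all $i=1,\dots,n$. (2) Conversely, suppose $L,R\in S^2$ are such that there is an inversion (respectively similarity) from $L^\perp$ to $R^\perp$ mapping $\pi_L(p_i)$ to $\pi_R(P_i)$ for all $i$. Then $\Pi$ has an inversion (respectively similarity) bond with left vector $L$ and right vector $R$.
   Context: An $n$-pod is a triple $\Pi=((p_1,\dots,p_n),(P_1,\dots,P_n),(d_1,\dots,d_n))$ with platform points $p_i\in\mathbb{R}^3$, base points $P_i\in\mathbb{R}^3$ and leg lengths $d_i\ge 0$. Write a direct isometry as $v\mapsto Mv+y$ ($M\in SO(3)$) and put $x=-M^ty$, $r=\langle y,y\rangle$. It corresponds to the point $(h:M:x:y:r)=(1:m_{11}:\dots:m_{33}:x_1:x_2:x_3:y_1:y_2:y_3:r)\in\mathbb{P}^{16}_{\mathbb{C}}$. $X$ is the complex Zariski closure of the set of these points. Throughout, $\langle u,u'\rangle=u^tu'$ is the complex bilinear form on $\mathbb{C}^3$. For each $i$, let $l_i$ be the linear form $$-d_i^2h+(\langle p_i,p_i\rangle+\langle P_i,P_i\rangle)h+r-2\langle p_i,x\rangle-2\langle y,P_i\rangle-2\langle Mp_i,P_i\rangle.$$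 At $h=1$ its vanishing means $\|Mp_i+y-P_i\|^2=d_i^2$. Define: - $K_\Pi=X\cap\{l_1=\dots=l_n=0\}$; - $B=X\cap\{h=0\}$, the boundary; - the set of bonds $B_\Pi=K_\Pi\cap B$. A point $\beta=(0:M:x:y:r)\in B$ has $M$ of rank at most $1$; put $N=rM+2yx^t$. It is an inversion point if $M\neq0$ and $N\neq0$, and a similarity point if $M=0$, $x\ne0$ and $y\ne0$. An inversion (similarity) bond is a bond that is an inversion (similarity) point. Left and right vectors. For a nonzero isotropic $u=(\alpha,\beta',\gamma)\in\mathbb{C}^3$ (i.e. $\langle u,u\rangle=0$), define $S(u)\in S^2$ in two steps. - First map $u$ to $\mathbb{P}^1_{\mathbb{C}}$: send it to $(\alpha-i\beta':\gamma)$ if $(i\alpha+\beta',\gamma)\ne(0,0)$, and to $(\gamma:-\alpha-i\beta')$ otherwise. - Then apply $(0:1)\mapsto(0,0,1)$ and $(1:a+ib)\mapsto\frac{1}{a^2+b^2+1}(2a,2b,a^2+b^2-1)$. For an inversion point, write $M=vw^t$ with $v,w$ nonzero isotropic; then $L=S(w)$ and $R=S(v)$. For a similarity point, $L=S(x)$ and $R=S(y)$. Projections and maps between planes. - For $\varepsilon\in S^2$, $\pi_\varepsilon:\mathbb{R}^3\to\varepsilon^\perp$ is the orthogonal projection onto the plane through the origin orthogonal to $\varepsilon$. - Identify $\varepsilon^\perp$ with $\mathbb{C}$ via $p\mapsto\langle p,u_1\rangle+i\langle p,u_2\rangle$, where $(u_1,u_2)$ is an orthonormal basis of $\varepsilon^\perp$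 with $u_1\times u_2=-\varepsilon$. This identification is well defined up to multiplication by a unit complex number. - An inversion from $L^\perp$ to $R^\perp$ is a map which, in these coordinates, has the form $z\mapsto\frac{\alpha}{z-z_0}+w_0$ with $\alpha\in\mathbb{C}^*$ (defined for $z\ne z_0$). - A similarity from $L^\perp$ to $R^\perp$ has the form $z\mapsto\alpha z+\gamma$ with $\alpha\in\mathbb{C}^*$. *)

theory Defs
  imports "HOL-Analysis.Analysis"
begin

definition cbil :: "complex^3 \<Rightarrow> complex^3 \<Rightarrow> complex" where
  "cbil u u' = (\<Sum>k\<in>UNIV. u$k * u'$k)"

definition cvec :: "real^3 \<Rightarrow> complex^3" where
  "cvec p = (\<chi> k. complex_of_real (p$k))"

definition cmat :: "real^3^3 \<Rightarrow> complex^3^3" where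
  "cmat M = (\<chi> i j. complex_of_real (M$i$j))"

definition isotropic :: "complex^3 \<Rightarrow> bool" where
  "isotropic u \<longleftrightarrow> cbil u u = 0"

definition outer :: "complex^3 \<Rightarrow> complex^3 \<Rightarrow> complex^3^3" where
  "outer v w = (\<chi> i j. v$i * w$j)"

definition SO3 :: "(real^3^3) set" where
  "SO3 = {M. transpose M ** M = mat 1 \<and> det M = 1}"

text \<open>A vector (h, M, x, y, r) of C^17; points of P^16 are represented by
  nonzero such vectors; all notions below are invariant under nonzero scaling.\<close>
type_synonym pt = "complex \<times> (complex^3^3) \<times> (complex^3) \<times> (complex^3) \<times> complex"

definition ph :: "pt \<Rightarrow> complex" where "ph v = fst v"
definition pM :: "pt \<Rightarrow> complex^3^3" where "pM v = fst (snd v)"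
definition px :: "pt \<Rightarrow> complex^3" where "px v = fst (snd (snd v))"
definition py :: "pt \<Rightarrow> complex^3" where "py v = fst (snd (snd (snd v)))"
definition pr :: "pt \<Rightarrow> complex" where "pr v = snd (snd (snd (snd v)))"

definition scale_pt :: "complex \<Rightarrow> pt \<Rightarrow> pt" where
  "scale_pt t v = (t * ph v, (\<chi> i j. t * pM v $ i $ j), (\<chi> i. t * px v $ i),
                   (\<chi> i. t * py v $ i), t * pr v)"

text \<open>The point (1:M:x:y:r) of the direct isometry v \<mapsto> Mv + y.\<close>
definition iso_pt :: "real^3^3 \<Rightarrow> real^3 \<Rightarrow> pt" where
  "iso_pt M y = (1, cmat M, cvec (- (transpose M *v y)), cvec y, complex_of_real (y \<bullet> y))"

text \<open>Polynomial functions on C^17 (over the infinite field C these are exactly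
  the polynomials in the 17 coordinates).\<close>
inductive_set polyfun :: "(pt \<Rightarrow> complex) set" where
  const: "(\<lambda>_. c) \<in> polyfun"
| coord_h: "ph \<in> polyfun"
| coord_M: "(\<lambda>v. pM v $ i $ j) \<in> polyfun"
| coord_x: "(\<lambda>v. px v $ i) \<in> polyfun"
| coord_y: "(\<lambda>v. py v $ i) \<in> polyfun"
| coord_r: "pr \<in> polyfun"
| add: "f \<in> polyfun \<Longrightarrow> g \<in> polyfun \<Longrightarrow> (\<lambda>v. f v + g v) \<in> polyfun"
| mult: "f \<in> polyfun \<Longrightarrow> g \<in> polyfun \<Longrightarrow> (\<lambda>v. f v * g v) \<in> polyfun"

definition zariski_closure :: "pt set \<Rightarrow> pt set" where
  "zariski_closure S = {v. \<forall>f\<in>polyfun. (\<forall>s\<in>S. f s = 0) \<longrightarrow> f v = 0}"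

text \<open>Affine cone over X: the Zariski closure (in C^17) of the cone over the
  points of direct isometries. A nonzero vector v represents a point of the
  projective closure X iff v lies in this cone.\<close>
definition X_cone :: "pt set" where
  "X_cone = zariski_closure {scale_pt t (iso_pt M y) | t M y. M \<in> SO3}"

definition inX :: "pt \<Rightarrow> bool" where
  "inX v \<longleftrightarrow> v \<noteq> 0 \<and> v \<in> X_cone"

text \<open>n-pod: platform points p i, base points P i, leg lengths d i, for i < n.\<close>
definition lform :: "real^3 \<Rightarrow> real^3 \<Rightarrow> real \<Rightarrow> pt \<Rightarrow> complex" where
  "lform p P d v =
     - complex_of_real (d^2) * ph v
     + (cbil (cvec p) (cvec p) + cbil (cvec P) (cvec P)) * ph v + pr v
     - 2 * cbil (cvec p) (px v) - 2 * cbil (py v) (cvec P)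
     - 2 * cbil (pM v *v cvec p) (cvec P)"

definition in_boundary :: "pt \<Rightarrow> bool" where
  "in_boundary v \<longleftrightarrow> inX v \<and> ph v = 0"

definition is_bond :: "nat \<Rightarrow> (nat \<Rightarrow> real^3) \<Rightarrow> (nat \<Rightarrow> real^3) \<Rightarrow> (nat \<Rightarrow> real)
                        \<Rightarrow> pt \<Rightarrow> bool" where
  "is_bond n p P d v \<longleftrightarrow> in_boundary v \<and> (\<forall>i<n. lform (p i) (P i) (d i) v = 0)"

definition Nmat :: "pt \<Rightarrow> complex^3^3" where
  "Nmat v = (\<chi> a b. pr v * pM v $ a $ b + 2 * py v $ a * px v $ b)"

definition inversion_point :: "pt \<Rightarrow> bool" where
  "inversion_point v \<longleftrightarrow> in_boundary v \<and> pM v \<noteq> 0 \<and> Nmat v \<noteq> 0"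

definition similarity_point :: "pt \<Rightarrow> bool" where
  "similarity_point v \<longleftrightarrow> in_boundary v \<and> pM v = 0 \<and> px v \<noteq> 0 \<and> py v \<noteq> 0"

definition S2 :: "(real^3) set" where
  "S2 = {e. norm e = 1}"

definition P1_to_S2 :: "complex \<times> complex \<Rightarrow> real^3" where
  "P1_to_S2 c = (if fst c = 0 then vector [0, 0, 1]
     else (let z = snd c / fst c; a = Re z; b = Im z in
           (1 / (a^2 + b^2 + 1)) *\<^sub>R vector [2*a, 2*b, a^2 + b^2 - 1]))"

definition Smap :: "complex^3 \<Rightarrow> real^3" where
  "Smap u = (let \<alpha> = u$1; \<beta> = u$2; \<gamma> = u$3 in
     P1_to_S2 (if (\<i>*\<alpha> + \<beta>, \<gamma>) \<noteq> (0, 0) then (\<alpha> - \<i>*\<beta>, \<gamma>) else (\<gamma>, -\<alpha> - \<i>*\<beta>)))"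

definition inv_LR :: "pt \<Rightarrow> real^3 \<Rightarrow> real^3 \<Rightarrow> complex^3 \<Rightarrow> complex^3 \<Rightarrow> bool" where
  "inv_LR \<beta> L R v w \<longleftrightarrow> v \<noteq> 0 \<and> w \<noteq> 0 \<and> isotropic v \<and> isotropic w \<and>
      pM \<beta> = outer v w \<and> L = Smap w \<and> R = Smap v"

definition sim_L :: "pt \<Rightarrow> real^3" where "sim_L \<beta> = Smap (px \<beta>)"
definition sim_R :: "pt \<Rightarrow> real^3" where "sim_R \<beta> = Smap (py \<beta>)"

definition proj :: "real^3 \<Rightarrow> real^3 \<Rightarrow> real^3" where
  "proj \<epsilon> p = p - (p \<bullet> \<epsilon>) *\<^sub>R \<epsilon>"

definition adapted_basis :: "real^3 \<Rightarrow> real^3 \<Rightarrow> real^3 \<Rightarrow> bool" where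
  "adapted_basis \<epsilon> u1 u2 \<longleftrightarrow> norm u1 = 1 \<and> norm u2 = 1 \<and> u1 \<bullet> u2 = 0 \<and>
     u1 \<bullet> \<epsilon> = 0 \<and> u2 \<bullet> \<epsilon> = 0 \<and> cross3 u1 u2 = - \<epsilon>"

definition plane_coord :: "real^3 \<Rightarrow> real^3 \<Rightarrow> real^3 \<Rightarrow> complex" where
  "plane_coord u1 u2 p = Complex (p \<bullet> u1) (p \<bullet> u2)"

text \<open>The identification with C is only defined up to a unit complex factor, under
  which the class of inversions is invariant; we quantify existentially over it.\<close>
definition has_inversion :: "real^3 \<Rightarrow> real^3 \<Rightarrow> nat \<Rightarrow> (nat \<Rightarrow> real^3) \<Rightarrow> (nat \<Rightarrow> real^3) \<Rightarrow> bool" where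
  "has_inversion L R n q Q \<longleftrightarrow>
     (\<exists>u1 u2 U1 U2 (\<alpha>::complex) z0 w0. adapted_basis L u1 u2 \<and> adapted_basis R U1 U2 \<and> \<alpha> \<noteq> 0 \<and>
        (\<forall>i<n. plane_coord u1 u2 (q i) \<noteq> z0 \<and>
               \<alpha> / (plane_coord u1 u2 (q i) - z0) + w0 = plane_coord U1 U2 (Q i)))"

definition has_similarity :: "real^3 \<Rightarrow> real^3 \<Rightarrow> nat \<Rightarrow> (nat \<Rightarrow> real^3) \<Rightarrow> (nat \<Rightarrow> real^3) \<Rightarrow> bool" where
  "has_similarity L R n q Q \<longleftrightarrow>
     (\<exists>u1 u2 U1 U2 (\<alpha>::complex) \<gamma>. adapted_basis L u1 u2 \<and> adapted_basis R U1 U2 \<and> \<alpha> \<noteq> 0 \<and>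
        (\<forall>i<n. \<alpha> * plane_coord u1 u2 (q i) + \<gamma> = plane_coord U1 U2 (Q i)))"

end

theory Submission
  imports Defs
begin


definition polyfn :: "(complex \<Rightarrow> complex) \<Rightarrow> bool" where
  "polyfn g \<longleftrightarrow> (\<exists>q. \<forall>z. g z = poly q z)"

lemma polyfn_const[intro]: "polyfn (\<lambda>z. c)"
  unfolding polyfn_def by (rule exI[of _ "[:c:]"]) simp
lemma polyfn_id[intro]: "polyfn (\<lambda>z. z)"
  unfolding polyfn_def by (rule exI[of _ "[:0,1:]"]) simp
lemma polyfn_add[intro]: "polyfn f \<Longrightarrow> polyfn g \<Longrightarrow> polyfn (\<lambda>z. f z + g z)"
  unfolding polyfn_def by (metis poly_add)
lemma polyfn_mult[intro]: "polyfn f \<Longrightarrow> polyfn g \<Longrightarrow> polyfn (\<lambda>z. f z * g z)"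
  unfolding polyfn_def by (metis poly_mult)
lemma polyfn_minus[intro]: "polyfn f \<Longrightarrow> polyfn (\<lambda>z. - f z)"
  unfolding polyfn_def by (metis poly_minus)
lemma polyfn_diff[intro]: "polyfn f \<Longrightarrow> polyfn g \<Longrightarrow> polyfn (\<lambda>z. f z - g z)"
  unfolding polyfn_def by (metis poly_diff)
lemma polyfn_power[intro]: "polyfn f \<Longrightarrow> polyfn (\<lambda>z. f z ^ n)"
  by (induction n) (auto simp: power_Suc)

definition polycurve :: "(complex \<Rightarrow> pt) \<Rightarrow> bool" where
  "polycurve \<gamma> \<longleftrightarrow> polyfn (\<lambda>z. ph (\<gamma> z)) \<and> (\<forall>i j. polyfn (\<lambda>z. pM (\<gamma> z) $ i $ j))
     \<and> (\<forall>i. polyfn (\<lambda>z. px (\<gamma> z) $ i)) \<and> (\<forall>i. polyfn (\<lambda>z. py (\<gamma> z) $ i))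
     \<and> polyfn (\<lambda>z. pr (\<gamma> z))"

lemma polyfun_curve:
  assumes "f \<in> polyfun" "polycurve \<gamma>"
  shows "polyfn (\<lambda>z. f (\<gamma> z))"
  using assms by (induction rule: polyfun.induct) (auto simp: polycurve_def)

lemma zc_vanish: "v \<in> zariski_closure S \<Longrightarrow> f \<in> polyfun \<Longrightarrow> (\<forall>s\<in>S. f s = 0) \<Longrightarrow> f v = 0"
  unfolding zariski_closure_def by blast

lemma closure_curve:
  assumes "polycurve \<gamma>" "infinite T" "\<forall>z\<in>T. \<gamma> z \<in> zariski_closure S"
  shows "\<gamma> z0 \<in> zariski_closure S"
  unfolding zariski_closure_def
proof (intro CollectI ballI impI)
  fix f assume f: "f \<in> polyfun" and van: "\<forall>s\<in>S. f s = 0"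
  obtain q where q: "\<forall>z. f (\<gamma> z) = poly q z"
    using polyfun_curve[OF f assms(1)] unfolding polyfn_def by blast
  have "T \<subseteq> {z. poly q z = 0}"
  proof
    fix z assume "z \<in> T"
    hence "f (\<gamma> z) = 0" using assms(3) zc_vanish[OF _ f van] by blast
    thus "z \<in> {z. poly q z = 0}" using q by simp
  qed
  hence "q = 0" using assms(2) poly_roots_finite finite_subset by blast
  thus "f (\<gamma> z0) = 0" using q by simp
qed

definition polymap :: "(pt \<Rightarrow> pt) \<Rightarrow> bool" where
  "polymap \<Phi> \<longleftrightarrow> (\<lambda>v. ph (\<Phi> v)) \<in> polyfun \<and> (\<forall>i j. (\<lambda>v. pM (\<Phi> v) $ i $ j) \<in> polyfun)
     \<and> (\<forall>i. (\<lambda>v. px (\<Phi> v) $ i) \<in> polyfun) \<and> (\<forall>i. (\<lambda>v. py (\<Phi> v) $ i) \<in> polyfun)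
     \<and> (\<lambda>v. pr (\<Phi> v)) \<in> polyfun"

lemma polyfun_comp:
  assumes "f \<in> polyfun" "polymap \<Phi>"
  shows "(\<lambda>v. f (\<Phi> v)) \<in> polyfun"
  using assms by (induction rule: polyfun.induct) (auto simp: polymap_def intro: polyfun.intros)

lemma closure_move:
  assumes "polymap \<Phi>" "\<forall>s\<in>S. \<Phi> s \<in> zariski_closure S" "q \<in> zariski_closure S"
  shows "\<Phi> q \<in> zariski_closure S"
  unfolding zariski_closure_def
proof (intro CollectI ballI impI)
  fix f assume f: "f \<in> polyfun" and van: "\<forall>s\<in>S. f s = 0"
  have "(\<lambda>v. f (\<Phi> v)) \<in> polyfun" by (rule polyfun_comp[OF f assms(1)])
  moreover have "\<forall>s\<in>S. f (\<Phi> s) = 0" using assms(2) zc_vanish[OF _ f van] by blast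
  ultimately show "f (\<Phi> q) = 0" using zc_vanish[OF assms(3)] by blast
qed

lemma subset_closure: "S \<subseteq> zariski_closure S"
  unfolding zariski_closure_def by blast



definition Scone :: "pt set" where
  "Scone = {scale_pt t (iso_pt M y) | t M y. M \<in> SO3}"

lemma X_cone_eq: "X_cone = zariski_closure Scone"
  unfolding X_cone_def Scone_def by simp

definition Rz :: "real \<Rightarrow> real \<Rightarrow> real^3^3" where
  "Rz a b = vector [vector [a, -b, 0], vector [b, a, 0], vector [0, 0, 1]]"

lemma Rz_SO3: "a^2 + b^2 = 1 \<Longrightarrow> Rz a b \<in> SO3"
  unfolding SO3_def Rz_def
  by (simp add: vec_eq_iff forall_3 sum_3 matrix_matrix_mult_def transpose_def mat_def det_3
        power2_eq_square algebra_simps)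

definition uM :: "complex \<Rightarrow> complex^3^3" where
  "uM u = vector [vector [(u^2+1)/2, -\<i>*(u^2-1)/2, 0], vector [\<i>*(u^2-1)/2, (u^2+1)/2, 0], vector [0, 0, u]]"

definition Fpt :: "complex \<Rightarrow> complex \<Rightarrow> complex^3 \<Rightarrow> complex^3 \<Rightarrow> pt" where
  "Fpt k u d c = (k*u, (\<chi> i j. k * uM u $ i $ j),
     (\<chi> i. k * (- u * d$i - (transpose (uM u) *v c)$i)),
     (\<chi> i. k * ((uM u *v d)$i + u * c$i)),
     k * (u * cbil d d + 2 * cbil (uM u *v d) c + u * cbil c c))"

lemma cvec_add: "cvec (a + b) = cvec a + cvec b"
  by (simp add: cvec_def vec_eq_iff)
lemma cvec_minus: "cvec (- a) = - cvec a"
  by (simp add: cvec_def vec_eq_iff)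
lemma cvec_diff: "cvec (a - b) = cvec a - cvec b"
  by (simp add: cvec_def vec_eq_iff)
lemma cvec_scale: "cvec (r *\<^sub>R a) = complex_of_real r *s cvec a"
  by (simp add: cvec_def vec_eq_iff)
lemma cvec_mv: "cvec (M *v a) = cmat M *v cvec a"
  by (simp add: cvec_def cmat_def vec_eq_iff matrix_vector_mult_def)
lemma cvec_vm: "cvec (a v* M) = cvec a v* cmat M"
  by (simp add: cvec_def cmat_def vec_eq_iff vector_matrix_mult_def)
lemma cmat_transpose: "cmat (transpose M) = transpose (cmat M)"
  by (simp add: cmat_def transpose_def vec_eq_iff)
lemma cbil_cvec: "cbil (cvec a) (cvec b) = complex_of_real (a \<bullet> b)"
  by (simp add: cbil_def cvec_def inner_vec_def)
lemma cmat_mm: "cmat (A ** B) = cmat A ** cmat B"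
  by (simp add: cmat_def vec_eq_iff matrix_matrix_mult_def)
lemma cvec_eq_iff: "cvec a = cvec b \<longleftrightarrow> a = b"
  by (simp add: cvec_def vec_eq_iff)
lemma cvec_zero[simp]: "cvec 0 = 0"
  by (simp add: cvec_def vec_eq_iff)
lemma cmat_mat1: "cmat (mat 1) = mat 1"
  by (simp add: cmat_def mat_def vec_eq_iff)

lemma cbil_comm: "cbil a b = cbil b a"
  by (simp add: cbil_def mult.commute)
lemma cbil_add_left: "cbil (a + b) c = cbil a c + cbil b c"
  by (simp add: cbil_def sum.distrib algebra_simps)
lemma cbil_add_right: "cbil c (a + b) = cbil c a + cbil c b"
  by (simp add: cbil_def sum.distrib algebra_simps)
lemma cbil_scale_left: "cbil (k *s a) c = k * cbil a c"
  by (simp add: cbil_def sum_distrib_left algebra_simps)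
lemma cbil_scale_right: "cbil c (k *s a) = k * cbil c a"
  by (simp add: cbil_def sum_distrib_left algebra_simps)
lemma cbil_minus_left: "cbil (- a) c = - cbil a c"
  by (simp add: cbil_def sum_negf)
lemma cbil_minus_right: "cbil c (- a) = - cbil c a"
  by (simp add: cbil_def sum_negf)
lemma cbil_diff_left: "cbil (a - b) c = cbil a c - cbil b c"
  by (simp add: cbil_def sum_subtractf algebra_simps)
lemma cbil_diff_right: "cbil c (a - b) = cbil c a - cbil c b"
  by (simp add: cbil_def sum_subtractf algebra_simps)
lemma cbil_mv: "cbil (A *v a) b = cbil a (transpose A *v b)"
  by (simp add: cbil_def matrix_vector_mult_def transpose_def sum_distrib_left sum_distrib_right
       algebra_simps) (subst sum.swap, simp)
lemma cbil_zero[simp]: "cbil 0 a = 0" "cbil a 0 = 0"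
  by (simp_all add: cbil_def)
lemmas cbil_simps = cbil_add_left cbil_add_right cbil_scale_left cbil_scale_right cbil_minus_left
  cbil_minus_right cbil_diff_left cbil_diff_right

lemma orth_MMt: "transpose (M::real^3^3) ** M = mat 1 \<Longrightarrow> M ** transpose M = mat 1"
  using matrix_left_right_inverse[of "transpose M" M] by blast

lemma orth_norm: "transpose M ** M = mat 1 \<Longrightarrow> (M *v d) \<bullet> (M *v d) = d \<bullet> (d::real^'n)"
proof -
  assume o: "transpose M ** M = mat 1"
  have "(M *v d) \<bullet> (M *v d) = (d v* transpose M) \<bullet> (M *v d)" by simp
  also have "\<dots> = d \<bullet> (transpose M *v (M *v d))" by (rule dot_lmul_matrix)
  also have "\<dots> = d \<bullet> d" by (simp only: matrix_vector_mul_assoc o matrix_vector_mul_lid)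
  finally show ?thesis .
qed

lemma F_gen:
  assumes orth: "transpose M ** M = mat 1" and UM: "UM = (\<chi> i j. u * cmat M $ i $ j)"
  shows "(k*u, (\<chi> i j. k * UM $ i $ j),
     (\<chi> i. k * (- u * cvec d$i - (transpose UM *v cvec c)$i)),
     (\<chi> i. k * ((UM *v cvec d)$i + u * cvec c$i)),
     k * (u * cbil (cvec d) (cvec d) + 2 * cbil (UM *v cvec d) (cvec c) + u * cbil (cvec c) (cvec c)))
    = scale_pt (k * u) (iso_pt M (M *v d + c))"
proof -
  have tr: "transpose UM *v v = u *s (transpose (cmat M) *v v)" for v using UM
    by (simp add: transpose_def vec_eq_iff matrix_vector_mult_def sum_distrib_left algebra_simps)
  have mv: "UM *v v = u *s (cmat M *v v)" for v using UM
    by (simp add: vec_eq_iff matrix_vector_mult_def sum_distrib_left algebra_simps)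
  have x: "- (transpose M *v (M *v d + c)) = - d - transpose M *v c"
    using orth by (simp add: matrix_vector_right_distrib matrix_vector_mul_assoc)
  have r: "(M *v d + c) \<bullet> (M *v d + c) = d \<bullet> d + 2 * ((M *v d) \<bullet> c) + c \<bullet> c"
    using orth_norm[OF orth, of d] by (simp add: inner_add_left inner_add_right inner_commute)
  have c1: "(\<chi> i j. k * UM $ i $ j) = (\<chi> i j. k * u * cmat M $ i $ j)"
    using UM by (simp add: vec_eq_iff)
  have c2: "(\<chi> i. k * (- u * cvec d$i - (transpose UM *v cvec c)$i)) = (\<chi> i. k * u * cvec (- (transpose M *v (M *v d + c))) $ i)"
    unfolding x tr by (simp add: vec_eq_iff cvec_diff cvec_minus cvec_mv cvec_vm cmat_transpose algebra_simps)
  have c3: "(\<chi> i. k * ((UM *v cvec d)$i + u * cvec c$i)) = (\<chi> i. k * u * cvec (M *v d + c) $ i)"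
    unfolding mv by (simp add: vec_eq_iff cvec_add cvec_mv algebra_simps)
  have c4: "k * (u * cbil (cvec d) (cvec d) + 2 * cbil (UM *v cvec d) (cvec c) + u * cbil (cvec c) (cvec c))
     = k * u * complex_of_real ((M *v d + c) \<bullet> (M *v d + c))"
    unfolding r mv by (simp add: cbil_scale_left cbil_cvec flip: cvec_mv) (simp add: algebra_simps)
  show ?thesis
    unfolding scale_pt_def iso_pt_def ph_def pM_def px_def py_def pr_def fst_conv snd_conv c1 c2 c3 c4
    by simp
qed

lemma uM_real:
  assumes "a^2 + b^2 = 1"
  shows "uM (Complex a b) = (\<chi> i j. Complex a b * cmat (Rz a (-b)) $ i $ j)"
proof -
  have h: "(complex_of_real a)^2 + (complex_of_real b)^2 = 1"
    using assms by (metis of_real_add of_real_power of_real_1)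
  have ii: "\<i>^2 = -1" by simp
  have e: "Complex a b = of_real a + \<i> * of_real b" by (simp add: complex_eq_iff)
  show ?thesis
    unfolding e uM_def Rz_def cmat_def
    apply (simp add: vec_eq_iff forall_3)
    apply (intro conjI)
    apply (simp_all add: field_simps)
    using h ii apply algebra+
    done
qed

lemma F_real:
  assumes "a^2 + b^2 = 1"
  shows "Fpt k (Complex a b) (cvec d) (cvec c) = scale_pt (k * Complex a b) (iso_pt (Rz a (-b)) (Rz a (-b) *v d + c))"
proof -
  have "a^2 + (-b)^2 = 1" using assms by simp
  hence so: "Rz a (-b) \<in> SO3" by (rule Rz_SO3)
  hence o: "transpose (Rz a (-b)) ** Rz a (-b) = mat 1" by (simp add: SO3_def)
  show ?thesis unfolding Fpt_def
    using F_gen[OF o uM_real[OF assms], of k d c] by simp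
qed

lemma polyfn_divc[intro]: "polyfn f \<Longrightarrow> polyfn (\<lambda>z. f z / c)"
  using polyfn_mult[of f "\<lambda>z. inverse c"] by (simp add: divide_inverse polyfn_const)

lemma polycurve_F: "polycurve (\<lambda>u. Fpt k u d c)"
  unfolding polycurve_def Fpt_def ph_def pM_def px_def py_def pr_def uM_def
  by (simp add: forall_3 matrix_vector_mult_def sum_3 cbil_def transpose_def) (intro conjI allI polyfn_add polyfn_mult polyfn_minus polyfn_diff polyfn_const polyfn_id polyfn_power polyfn_divc | simp)+

lemma infinite_circle: "infinite ((\<lambda>a. Complex a (sqrt (1 - a^2))) ` {0..1})"
proof -
  have "inj_on (\<lambda>a. Complex a (sqrt (1 - a^2))) {0..1}"
    by (rule inj_onI) (simp add: complex_eq_iff)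
  moreover have "infinite {0..(1::real)}" by simp
  ultimately show ?thesis using finite_imageD by blast
qed

lemma F_in_X: "Fpt k u (cvec d) (cvec c) \<in> X_cone"
  unfolding X_cone_eq
proof (rule closure_curve[OF polycurve_F infinite_circle])
  show "\<forall>z\<in>(\<lambda>a. Complex a (sqrt (1 - a^2))) ` {0..1}. Fpt k z (cvec d) (cvec c) \<in> zariski_closure Scone"
  proof
    fix z assume "z \<in> (\<lambda>a. Complex a (sqrt (1 - a^2))) ` {0..1}"
    then obtain a where a: "a \<in> {0..1}" "z = Complex a (sqrt (1 - a^2))" by blast
    have "a^2 \<le> 1" using a by (simp add: power_le_one)
    hence 1: "a^2 + (sqrt (1 - a^2))^2 = 1" by simp
    hence "Rz a (- sqrt (1 - a^2)) \<in> SO3" by (intro Rz_SO3) simp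
    hence "Fpt k z (cvec d) (cvec c) \<in> Scone"
      unfolding a(2) F_real[OF \<open>a^2 + (sqrt (1 - a^2))^2 = 1\<close>] Scone_def by blast
    thus "Fpt k z (cvec d) (cvec c) \<in> zariski_closure Scone" using subset_closure by blast
  qed
qed



definition e3c :: "complex^3" where "e3c = vector [0, 0, 1]"

definition KM :: "complex \<Rightarrow> complex \<Rightarrow> complex^3^3" where
  "KM \<alpha> z = vector [vector [(1 + z^4*\<alpha>^2)/2, -\<i>*(1 - z^4*\<alpha>^2)/2, 0],
                   vector [\<i>*(1 - z^4*\<alpha>^2)/2, (1 + z^4*\<alpha>^2)/2, 0], vector [0, 0, z^2*\<alpha>]]"

definition Gpt :: "complex \<Rightarrow> complex^3 \<Rightarrow> complex^3 \<Rightarrow> complex \<Rightarrow> pt" where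
  "Gpt \<alpha> dd cc z = (z^2*\<alpha>, KM \<alpha> z,
     (\<chi> i. - (z^2*\<alpha>*dd$i) - z*\<alpha>*e3c$i - (transpose (KM \<alpha> z) *v cc)$i),
     (\<chi> i. (KM \<alpha> z *v dd)$i + z*\<alpha>*e3c$i + z^2*\<alpha>*cc$i),
     z^2*\<alpha>*cbil dd dd + 2*z*\<alpha>*dd$3 + \<alpha> + 2*cbil (KM \<alpha> z *v dd) cc + 2*z*\<alpha>*cc$3 + z^2*\<alpha>*cbil cc cc)"

lemma G_eq_F:
  assumes "z \<noteq> 0" "\<alpha> \<noteq> 0"
  shows "Gpt \<alpha> dd cc z = Fpt (z^4*\<alpha>^2) (1/(\<alpha>*z^2)) (dd + (1/z) *s e3c) cc"
  using assms
  unfolding Gpt_def Fpt_def KM_def uM_def e3c_def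
  apply (simp add: vec_eq_iff forall_3 sum_3 matrix_vector_mult_def transpose_def cbil_def)
  apply (intro conjI)
  apply (simp_all add: field_simps)
  apply algebra+
  done

lemma polycurve_G: "polycurve (Gpt \<alpha> dd cc)"
  unfolding polycurve_def Gpt_def ph_def pM_def px_def py_def pr_def KM_def e3c_def
  by (simp add: forall_3 matrix_vector_mult_def sum_3 cbil_def transpose_def) (intro conjI allI polyfn_add polyfn_mult polyfn_minus polyfn_diff polyfn_const polyfn_id polyfn_power polyfn_divc | simp)+

lemma cvec_e3: "cvec (axis 3 1) = e3c"
  by (simp add: cvec_def e3c_def vec_eq_iff forall_3 axis_def)

lemma infinite_nonzero_reals: "infinite (complex_of_real ` (UNIV - {0}))"
proof -
  have "inj_on complex_of_real (UNIV - {0})" by (rule inj_onI) simp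
  moreover have "infinite (UNIV - {0::real})" by (simp add: infinite_UNIV_char_0)
  ultimately show ?thesis using finite_imageD by blast
qed

lemma G0_in_X_nz:
  assumes "\<alpha> \<noteq> 0"
  shows "Gpt \<alpha> (cvec d1) (cvec c) 0 \<in> X_cone"
  unfolding X_cone_eq
proof (rule closure_curve[OF polycurve_G infinite_nonzero_reals], intro ballI)
  fix z assume "z \<in> complex_of_real ` (UNIV - {0})"
  then obtain \<sigma> where s: "\<sigma> \<noteq> 0" "z = complex_of_real \<sigma>" by blast
  have "cvec (d1 + (1/\<sigma>) *\<^sub>R axis 3 1) = cvec d1 + (1/z) *s e3c"
    using s by (simp add: cvec_add cvec_scale cvec_e3)
  hence "Gpt \<alpha> (cvec d1) (cvec c) z = Fpt (z^4*\<alpha>^2) (1/(\<alpha>*z^2)) (cvec (d1 + (1/\<sigma>) *\<^sub>R axis 3 1)) (cvec c)"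
    using G_eq_F[of z \<alpha>] s assms by simp
  thus "Gpt \<alpha> (cvec d1) (cvec c) z \<in> zariski_closure Scone"
    using F_in_X X_cone_eq by simp
qed

lemma polycurve_G_alpha: "polycurve (\<lambda>\<alpha>. Gpt \<alpha> dd cc z)"
  unfolding polycurve_def Gpt_def ph_def pM_def px_def py_def pr_def KM_def e3c_def
  by (simp add: forall_3 matrix_vector_mult_def sum_3 cbil_def transpose_def) (intro conjI allI polyfn_add polyfn_mult polyfn_minus polyfn_diff polyfn_const polyfn_id polyfn_power polyfn_divc | simp)+

lemma infinite_nonzero_complex: "infinite (UNIV - {0::complex})"
  by (simp add: infinite_UNIV_char_0)

lemma G0_in_X: "Gpt \<alpha> (cvec d1) (cvec c) 0 \<in> X_cone"
  unfolding X_cone_eq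
  by (rule closure_curve[OF polycurve_G_alpha infinite_nonzero_complex]) (use G0_in_X_nz X_cone_eq in auto)

lemma scale_scale: "scale_pt t (scale_pt t' q) = scale_pt (t*t') q"
  by (simp add: scale_pt_def ph_def pM_def px_def py_def pr_def vec_eq_iff mult.assoc)

lemma polymap_scale: "polymap (scale_pt t)"
  unfolding polymap_def scale_pt_def ph_def pM_def px_def py_def pr_def
  by (simp add: polyfun.intros(1,7,8) polyfun.coord_h[unfolded ph_def] polyfun.coord_M[unfolded pM_def]
        polyfun.coord_x[unfolded px_def] polyfun.coord_y[unfolded py_def] polyfun.coord_r[unfolded pr_def])

lemma X_scale: "q \<in> X_cone \<Longrightarrow> scale_pt t q \<in> X_cone"
  unfolding X_cone_eq
proof (rule closure_move[OF polymap_scale], intro ballI)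
  fix s assume "s \<in> Scone"
  then obtain t' M y where "s = scale_pt t' (iso_pt M y)" "M \<in> SO3" unfolding Scone_def by blast
  hence "scale_pt t s \<in> Scone" unfolding Scone_def using scale_scale by blast
  thus "scale_pt t s \<in> zariski_closure Scone" using subset_closure by blast
qed

definition v0 :: "complex^3" where "v0 = vector [1, \<i>, 0]"
definition w0 :: "complex^3" where "w0 = vector [1, -\<i>, 0]"

lemma std_inv_in_X:
  "((0::complex), outer v0 w0, (-\<gamma>) *s w0, \<delta> *s v0, 2*\<alpha> + 2*\<delta>*\<gamma>) \<in> X_cone"
proof -
  define c :: "real^3" where "c = vector [Re \<gamma>, Im \<gamma>, 0]"
  define d1 :: "real^3" where "d1 = vector [Re \<delta>, - Im \<delta>, 0]"
  have "scale_pt 2 (Gpt \<alpha> (cvec d1) (cvec c) 0) = ((0::complex), outer v0 w0, (-\<gamma>) *s w0, \<delta> *s v0, 2*\<alpha> + 2*\<delta>*\<gamma>)"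
    unfolding scale_pt_def Gpt_def KM_def c_def d1_def cvec_def outer_def v0_def w0_def e3c_def ph_def pM_def px_def py_def pr_def
    by (simp add: vec_eq_iff forall_3 sum_3 matrix_vector_mult_def transpose_def cbil_def complex_eq_iff algebra_simps)
  thus ?thesis using X_scale[OF G0_in_X] by metis
qed



lemma std_sim_in_X:
  "((0::complex), 0, a *s w0, b *s v0, \<rho>) \<in> X_cone"
proof -
  define H where "H = (\<lambda>\<epsilon>::complex. ((0::complex), (\<chi> i j. \<epsilon> * outer v0 w0 $ i $ j), a *s w0, b *s v0, \<rho>))"
  have pc: "polycurve H"
    unfolding polycurve_def H_def ph_def pM_def px_def py_def pr_def
    by (auto intro!: polyfn_mult polyfn_id polyfn_const)
  have "H \<epsilon> \<in> zariski_closure Scone" if "\<epsilon> \<in> UNIV - {0}" for \<epsilon>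
  proof -
    have e: "\<epsilon> \<noteq> 0" using that by simp
    have "H \<epsilon> = scale_pt \<epsilon> ((0::complex), outer v0 w0, (-(-a/\<epsilon>)) *s w0, (b/\<epsilon>) *s v0,
              2*(\<rho>/(2*\<epsilon>) + a*b/\<epsilon>^2) + 2*(b/\<epsilon>)*(-a/\<epsilon>))"
      using e unfolding H_def scale_pt_def ph_def pM_def px_def py_def pr_def
      by (simp add: vec_eq_iff field_simps power2_eq_square)
    thus ?thesis using X_scale[OF std_inv_in_X] X_cone_eq by metis
  qed
  hence "H 0 \<in> zariski_closure Scone"
    by (intro closure_curve[OF pc infinite_nonzero_complex]) auto
  moreover have "H 0 = ((0::complex), 0, a *s w0, b *s v0, \<rho>)"
    unfolding H_def by (simp add: vec_eq_iff)
  ultimately show ?thesis using X_cone_eq by simp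
qed

definition Phi :: "real^3^3 \<Rightarrow> real^3^3 \<Rightarrow> pt \<Rightarrow> pt" where
  "Phi A B q = (ph q, cmat A ** pM q ** cmat B, transpose (cmat B) *v px q, cmat A *v py q, pr q)"

lemma polyfun_smult: "f \<in> polyfun \<Longrightarrow> (\<lambda>v. c * f v) \<in> polyfun"
  using polyfun.mult[OF polyfun.const] by blast

lemma polymap_Phi: "polymap (Phi A B)"
  unfolding polymap_def Phi_def ph_def pM_def px_def py_def pr_def
  by (simp add: matrix_matrix_mult_def matrix_vector_mult_def transpose_def sum_3)
     (intro conjI allI polyfun.add polyfun_smult polyfun.mult polyfun.const
       polyfun.coord_h[unfolded ph_def] polyfun.coord_M[unfolded pM_def]
        polyfun.coord_x[unfolded px_def] polyfun.coord_y[unfolded py_def] polyfun.coord_r[unfolded pr_def])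

lemma SO3_orth: "M \<in> SO3 \<Longrightarrow> transpose M ** M = mat 1" by (simp add: SO3_def)

lemma SO3_mult: "A \<in> SO3 \<Longrightarrow> B \<in> SO3 \<Longrightarrow> A ** B \<in> SO3"
  unfolding SO3_def
  by (simp add: det_mul matrix_transpose_mul matrix_mul_assoc)
     (metis matrix_mul_assoc matrix_mul_lid)

lemma mv_neg: "A *v (- x) = - (A *v (x::'a::ring_1^'n))"
  by (simp add: vec_eq_iff matrix_vector_mult_def sum_negf)

lemma Phi_iso:
  assumes "A \<in> SO3" "B \<in> SO3"
  shows "Phi A B (scale_pt t (iso_pt M y)) = scale_pt t (iso_pt (A ** M ** B) (A *v y))"
proof -
  have oA: "transpose A ** A = mat 1" using assms SO3_orth by blast
  have tA: "transpose A *v (A *v y) = y"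
    by (simp only: matrix_vector_mul_assoc oA matrix_vector_mul_lid)
  have x: "- (transpose (A ** M ** B) *v (A *v y)) = transpose B *v (- (transpose M *v y))"
  proof -
    have "transpose (A ** M ** B) *v (A *v y) = transpose B *v (transpose M *v (transpose A *v (A *v y)))"
      by (simp only: matrix_transpose_mul matrix_vector_mul_assoc matrix_mul_assoc)
    thus ?thesis by (simp only: tA mv_neg)
  qed
  have r: "(A *v y) \<bullet> (A *v y) = y \<bullet> y" using orth_norm[OF oA] .
  have m: "cmat (A ** M ** B) = cmat A ** cmat M ** cmat B" by (simp add: cmat_mm)
  have sm: "cmat A ** (\<chi> i j. t * C $ i $ j) ** cmat B = (\<chi> i j. t * (cmat A ** C ** cmat B) $ i $ j)" for C
    by (simp add: vec_eq_iff matrix_matrix_mult_def sum_distrib_left sum_distrib_right algebra_simps)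
  have sv: "D *v (\<chi> i. t * v $ i) = (\<chi> i. t * (D *v v) $ i)" for D :: "complex^3^3" and v
    by (simp add: vec_eq_iff matrix_vector_mult_def sum_distrib_left algebra_simps)
  show ?thesis
    unfolding Phi_def scale_pt_def iso_pt_def ph_def pM_def px_def py_def pr_def fst_conv snd_conv x r m
    unfolding cvec_mv cmat_transpose sm sv by simp
qed

lemma X_Phi:
  assumes "A \<in> SO3" "B \<in> SO3" "q \<in> X_cone"
  shows "Phi A B q \<in> X_cone"
  using assms(3) unfolding X_cone_eq
proof (rule closure_move[OF polymap_Phi, rotated], intro ballI)
  fix s assume "s \<in> Scone"
  then obtain t M y where s: "s = scale_pt t (iso_pt M y)" "M \<in> SO3" unfolding Scone_def by blast
  have "A ** M ** B \<in> SO3" using SO3_mult assms s by blast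
  hence "Phi A B s \<in> Scone" unfolding s Phi_iso[OF assms(1,2)] Scone_def by blast
  thus "Phi A B s \<in> zariski_closure Scone" using subset_closure by blast
qed

definition orthonormal2 :: "real^3 \<Rightarrow> real^3 \<Rightarrow> bool" where
  "orthonormal2 u1 u2 \<longleftrightarrow> norm u1 = 1 \<and> norm u2 = 1 \<and> u1 \<bullet> u2 = 0"

definition frame :: "real^3 \<Rightarrow> real^3 \<Rightarrow> real^3^3" where
  "frame u1 u2 = transpose (vector [u1, u2, cross3 u1 u2])"

definition Vc :: "real^3 \<Rightarrow> real^3 \<Rightarrow> complex^3" where
  "Vc u1 u2 = cvec u1 + \<i> *s cvec u2"

lemma cross_facts:
  assumes "orthonormal2 u1 u2"
  shows "u1 \<bullet> u1 = 1" "u2 \<bullet> u2 = 1" "u1 \<bullet> u2 = 0" "u1 \<bullet> cross3 u1 u2 = 0" "u2 \<bullet> cross3 u1 u2 = 0"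
    "cross3 u1 u2 \<bullet> cross3 u1 u2 = 1"
proof -
  show 1: "u1 \<bullet> u1 = 1" "u2 \<bullet> u2 = 1" "u1 \<bullet> u2 = 0" using assms
    by (auto simp: orthonormal2_def inner_commute dot_square_norm)
  show "u1 \<bullet> cross3 u1 u2 = 0" "u2 \<bullet> cross3 u1 u2 = 0"
    using dot_cross_self by (auto simp: inner_commute)
  have "(norm (cross3 u1 u2))\<^sup>2 = 1" using norm_cross_dot[of u1 u2] assms
    by (simp add: orthonormal2_def)
  thus "cross3 u1 u2 \<bullet> cross3 u1 u2 = 1" by (simp add: dot_square_norm)
qed

lemma mmt_entry: "(A ** transpose A) $ i $ j = A $ i \<bullet> A $ j" for A :: "real^3^3"
  by (simp add: matrix_matrix_mult_def transpose_def inner_vec_def)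

lemma frame_SO3:
  assumes "orthonormal2 u1 u2"
  shows "frame u1 u2 \<in> SO3"
proof -
  note f = cross_facts[OF assms]
  let ?R = "vector [u1, u2, cross3 u1 u2] :: real^3^3"
  have "?R ** transpose ?R = mat 1"
    unfolding vec_eq_iff mmt_entry using f
    by (simp add: forall_3 mat_def inner_commute)
  moreover have "det ?R = 1"
  proof -
    have "det ?R = u1 \<bullet> cross3 u2 (cross3 u1 u2)" by (simp add: dot_cross_det)
    also have "\<dots> = cross3 u1 u2 \<bullet> cross3 u1 u2" by (simp add: cross3_simps)
    finally show ?thesis using f by simp
  qed
  ultimately show ?thesis unfolding SO3_def frame_def by (simp add: det_transpose)
qed

lemma transpose_SO3: "M \<in> SO3 \<Longrightarrow> transpose M \<in> SO3"
  unfolding SO3_def using orth_MMt by (simp add: det_transpose)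

lemma frame_v0: "cmat (frame u1 u2) *v v0 = Vc u1 u2"
  by (simp add: frame_def cmat_def v0_def Vc_def cvec_def vec_eq_iff forall_3 matrix_vector_mult_def sum_3 transpose_def)

lemma frame_w0: "transpose (cmat (transpose (frame u1 (-u2)))) *v w0 = Vc u1 u2"
  by (simp add: frame_def cmat_def w0_def Vc_def cvec_def vec_eq_iff forall_3 matrix_vector_mult_def sum_3 transpose_def)

lemma outer_mult: "A ** outer v w ** B = outer (A *v v) (transpose B *v w)" for A B :: "complex^3^3"
  by (simp add: outer_def vec_eq_iff matrix_matrix_mult_def matrix_vector_mult_def transpose_def sum_3 algebra_simps)

lemma mv_smult: "A *v (c *s v) = c *s (A *v v)" for A :: "complex^3^3"
  by (simp add: vec_eq_iff matrix_vector_mult_def sum_distrib_left algebra_simps)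

lemma inv_X:
  assumes "orthonormal2 u1 u2" "orthonormal2 U1 U2"
  shows "((0::complex), outer (Vc U1 U2) (Vc u1 u2), (-\<gamma>) *s Vc u1 u2, \<delta> *s Vc U1 U2, 2*\<alpha> + 2*\<delta>*\<gamma>) \<in> X_cone"
proof -
  let ?A = "frame U1 U2" and ?B = "transpose (frame u1 (-u2))"
  have o: "orthonormal2 u1 (-u2)" using assms(1) by (simp add: orthonormal2_def)
  have "Phi ?A ?B ((0::complex), outer v0 w0, (-\<gamma>) *s w0, \<delta> *s v0, 2*\<alpha> + 2*\<delta>*\<gamma>) \<in> X_cone"
    by (rule X_Phi[OF frame_SO3[OF assms(2)] transpose_SO3[OF frame_SO3[OF o]] std_inv_in_X])
  thus ?thesis
    unfolding Phi_def ph_def pM_def px_def py_def pr_def fst_conv snd_conv outer_mult mv_smult frame_v0 frame_w0 .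
qed

lemma sim_X:
  assumes "orthonormal2 u1 u2" "orthonormal2 U1 U2"
  shows "((0::complex), 0, a *s Vc u1 u2, b *s Vc U1 U2, \<rho>) \<in> X_cone"
proof -
  let ?A = "frame U1 U2" and ?B = "transpose (frame u1 (-u2))"
  have o: "orthonormal2 u1 (-u2)" using assms(1) by (simp add: orthonormal2_def)
  have "Phi ?A ?B ((0::complex), 0, a *s w0, b *s v0, \<rho>) \<in> X_cone"
    by (rule X_Phi[OF frame_SO3[OF assms(2)] transpose_SO3[OF frame_SO3[OF o]] std_sim_in_X])
  moreover have "cmat ?A ** 0 ** cmat ?B = 0"
    by (simp add: vec_eq_iff matrix_matrix_mult_def)
  ultimately show ?thesis
    unfolding Phi_def ph_def pM_def px_def py_def pr_def fst_conv snd_conv mv_smult frame_v0 frame_w0 by simp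
qed



lemma stereo_key:
  fixes a1 a2 a3 b1 b2 b3 :: real
  assumes ra: "a1*a1 + a2*a2 + a3*a3 = 1" and rb: "b1*b1 + b2*b2 + b3*b3 = 1"
    and c13: "a1*a3 + b1*b3 + n1*n3 = 0" and c23: "a2*a3 + b2*b3 + n2*n3 = 0" and c33: "a3*a3 + b3*b3 + n3*n3 = 1"
    and n1: "n1 = a2*b3 - a3*b2" and n2: "n2 = a3*b1 - a1*b3" and n3: "n3 = a1*b2 - a2*b1"
    and N: "N = (a1+b2)^2 + (b1-a2)^2" "N \<noteq> 0"
    and x: "x = (a3*(a1+b2) + b3*(b1-a2))/N" and y: "y = (b3*(a1+b2) - a3*(b1-a2))/N"
  shows "2*x/(x^2+y^2+1) = -n1" "2*y/(x^2+y^2+1) = -n2" "(x^2+y^2-1)/(x^2+y^2+1) = -n3"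
proof -
  have pq: "(a3*(a1+b2) + b3*(b1-a2))^2 + (b3*(a1+b2) - a3*(b1-a2))^2 = (a3*a3+b3*b3)*N"
    unfolding N(1) by algebra
  have s: "x^2 + y^2 = (a3*a3+b3*b3)/N"
  proof -
    have "x^2 + y^2 = ((a3*(a1+b2) + b3*(b1-a2))^2 + (b3*(a1+b2) - a3*(b1-a2))^2)/N^2"
      unfolding x y by (simp only: power_divide add_divide_distrib[symmetric])
    also have "\<dots> = (a3*a3+b3*b3)/N" unfolding pq using N(2) by (simp add: power2_eq_square)
    finally show ?thesis .
  qed
  have N': "N = 2 + 2*n3 - a3*a3 - b3*b3" unfolding N(1) n3 using ra rb by algebra
  have h: "x^2+y^2+1 = 2*(1+n3)/N" unfolding s using N' N(2) by (simp add: field_simps)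
  have pos: "1 + n3 \<noteq> 0"
  proof
    assume "1 + n3 = 0"
    hence "x^2+y^2+1 = 0" using h by simp
    moreover have "x^2+y^2+1 > 0" by (simp add: add_nonneg_pos)
    ultimately show False by simp
  qed
  have D: "2*(1+n3)/N \<noteq> 0" using pos N(2) by simp
  have P: "a3*(a1+b2) + b3*(b1-a2) = -n1*(1+n3)" using c13 n1 n3 by algebra
  have Q: "b3*(a1+b2) - a3*(b1-a2) = -n2*(1+n3)" using c23 n2 n3 by algebra
  show "2*x/(x^2+y^2+1) = -n1" unfolding h using D
    by (simp add: divide_eq_eq x P) (simp add: field_simps N(2))
  show "2*y/(x^2+y^2+1) = -n2" unfolding h using D
    by (simp add: divide_eq_eq y Q) (simp add: field_simps N(2))
  show "(x^2+y^2-1)/(x^2+y^2+1) = -n3"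
  proof -
    have "x^2+y^2-1 = (a3*a3+b3*b3 - N)/N" unfolding s using N(2) by (simp add: field_simps)
    moreover have "a3*a3+b3*b3 - N = -n3*(2*(1+n3))" using N' c33 by algebra
    ultimately show ?thesis unfolding h using D N(2) by (simp add: divide_eq_eq)
  qed
qed

lemma Vc_comp: "Vc u1 u2 $ k = Complex (u1$k) (u2$k)"
  by (simp add: Vc_def cvec_def complex_eq_iff)

lemma col_facts:
  assumes "orthonormal2 u1 u2"
  shows "u1$i*u1$j + u2$i*u2$j + cross3 u1 u2$i*cross3 u1 u2$j = (if i = j then 1 else 0)"
proof -
  have "frame u1 u2 ** transpose (frame u1 u2) = mat 1"
    using frame_SO3[OF assms] orth_MMt by (simp add: SO3_def)
  hence "(frame u1 u2 ** transpose (frame u1 u2)) $ i $ j = mat 1 $ i $ j" by simp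
  thus ?thesis by (simp add: frame_def matrix_matrix_mult_def transpose_def sum_3 mat_def)
qed

lemma Smap_Vc:
  assumes o: "orthonormal2 u1 u2"
  shows "Smap (Vc u1 u2) = - cross3 u1 u2"
proof -
  define a1 a2 a3 b1 b2 b3 where "a1 = u1$1" "a2 = u1$2" "a3 = u1$3" "b1 = u2$1" "b2 = u2$2" "b3 = u2$3"
  define n1 n2 n3 where "n1 = cross3 u1 u2$1" "n2 = cross3 u1 u2$2" "n3 = cross3 u1 u2$3"
  have n: "n1 = a2*b3 - a3*b2" "n2 = a3*b1 - a1*b3" "n3 = a1*b2 - a2*b1"
    unfolding a1_a2_a3_b1_b2_b3_def n1_n2_n3_def by (simp_all add: cross3_def)
  note cf = cross_facts[OF o]
  have ra: "a1*a1 + a2*a2 + a3*a3 = 1" using cf(1) unfolding a1_a2_a3_b1_b2_b3_def by (simp add: inner_vec_def sum_3)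
  have rb: "b1*b1 + b2*b2 + b3*b3 = 1" using cf(2) unfolding a1_a2_a3_b1_b2_b3_def by (simp add: inner_vec_def sum_3)
  have rab: "a1*b1 + a2*b2 + a3*b3 = 0" using cf(3) unfolding a1_a2_a3_b1_b2_b3_def by (simp add: inner_vec_def sum_3)
  have c13: "a1*a3 + b1*b3 + n1*n3 = 0" using col_facts[OF o, of 1 3] unfolding a1_a2_a3_b1_b2_b3_def n1_n2_n3_def by simp
  have c23: "a2*a3 + b2*b3 + n2*n3 = 0" using col_facts[OF o, of 2 3] unfolding a1_a2_a3_b1_b2_b3_def n1_n2_n3_def by simp
  have c33: "a3*a3 + b3*b3 + n3*n3 = 1" using col_facts[OF o, of 3 3] unfolding a1_a2_a3_b1_b2_b3_def n1_n2_n3_def by simp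
  have rhs: "- cross3 u1 u2 = vector [-n1, -n2, -n3]"
    unfolding n1_n2_n3_def by (simp add: vec_eq_iff forall_3)
  have V: "Vc u1 u2 $ 1 = Complex a1 b1" "Vc u1 u2 $ 2 = Complex a2 b2" "Vc u1 u2 $ 3 = Complex a3 b3"
    unfolding a1_a2_a3_b1_b2_b3_def Vc_comp by simp_all
  show ?thesis
  proof (cases "a2 = b1 \<and> a1 = -b2 \<and> a3 = 0 \<and> b3 = 0")
    case True
    hence "n1 = 0" "n2 = 0" "n3 = -1" using n rb by (auto simp: algebra_simps)
    moreover have "Smap (Vc u1 u2) = vector [0, 0, 1]"
      unfolding Smap_def Let_def V using True by (simp add: P1_to_S2_def complex_eq_iff)
    ultimately show ?thesis unfolding rhs by simp
  next
    case False
    have cond: "(\<i> * Complex a1 b1 + Complex a2 b2, Complex a3 b3) \<noteq> (0, 0)"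
      using False by (auto simp: complex_eq_iff)
    define N where "N = (a1+b2)^2 + (b1-a2)^2"
    have N0: "N \<noteq> 0"
    proof
      assume "N = 0"
      hence e: "a1 = -b2" "b1 = a2" unfolding N_def by (auto simp: add_nonneg_eq_0_iff)
      hence "a3*b3 = 0" using rab by (simp add: algebra_simps)
      moreover have "a3*a3 = b3*b3" using ra rb e by (simp add: algebra_simps)
      ultimately have "a3 = 0" "b3 = 0" by auto
      thus False using False e by simp
    qed
    have D: "Complex a1 b1 - \<i> * Complex a2 b2 = Complex (a1+b2) (b1-a2)" by (simp add: complex_eq_iff)
    have Dnz: "Complex (a1+b2) (b1-a2) \<noteq> 0" using N0 unfolding N_def by (auto simp: complex_eq_iff)
    define x where "x = (a3*(a1+b2) + b3*(b1-a2))/N"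
    define y where "y = (b3*(a1+b2) - a3*(b1-a2))/N"
    have z: "Re (Complex a3 b3 / Complex (a1+b2) (b1-a2)) = x" "Im (Complex a3 b3 / Complex (a1+b2) (b1-a2)) = y"
      unfolding x_def y_def N_def by (simp_all add: Re_divide Im_divide)
    note k = stereo_key[OF ra rb c13 c23 c33 n N_def N0 x_def y_def]
    have "Smap (Vc u1 u2) = (1 / (x^2 + y^2 + 1)) *\<^sub>R vector [2*x, 2*y, x^2 + y^2 - 1]"
      unfolding Smap_def Let_def V using cond Dnz unfolding D by (simp add: P1_to_S2_def z)
    also have "\<dots> = vector [-n1, -n2, -n3]"
      using k by (simp add: vec_eq_iff forall_3 vector_def)
    finally show ?thesis unfolding rhs .
  qed
qed



lemma P1_scale: "l \<noteq> 0 \<Longrightarrow> P1_to_S2 (l*a, l*b) = P1_to_S2 (a, b)"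
  by (simp add: P1_to_S2_def)

definition rep :: "complex^3 \<Rightarrow> complex \<times> complex" where
  "rep u = (if (\<i>*u$1 + u$2, u$3) \<noteq> (0, 0) then (u$1 - \<i>*u$2, u$3) else (u$3, -u$1 - \<i>*u$2))"

lemma Smap_rep: "Smap u = P1_to_S2 (rep u)"
  by (simp add: Smap_def rep_def Let_def)

lemma rep_scale:
  assumes "l \<noteq> 0"
  shows "rep (l *s u) = (l * fst (rep u), l * snd (rep u))"
proof -
  have e: "\<i> * (l * u$1) + l * u$2 = l * (\<i>*u$1 + u$2)" by (simp add: algebra_simps)
  have c: "((\<i> * (l * u$1) + l * u$2, l * u$3) \<noteq> (0, 0)) = ((\<i>*u$1 + u$2, u$3) \<noteq> (0, 0))"
    unfolding e using assms by simp
  show ?thesis unfolding rep_def vector_scalar_mult_def vec_lambda_beta c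
    by (simp add: algebra_simps)
qed

lemma Smap_scale:
  assumes "l \<noteq> 0"
  shows "Smap (l *s u) = Smap u"
  unfolding Smap_rep rep_scale[OF assms] P1_scale[OF assms] by simp

lemma iso_decomp:
  assumes iso: "isotropic w" and nz: "w \<noteq> 0"
  shows "\<exists>l u1 u2. l \<noteq> 0 \<and> orthonormal2 u1 u2 \<and> w = l *s Vc u1 u2"
proof -
  define a :: "real^3" where "a = (\<chi> k. Re (w$k))"
  define b :: "real^3" where "b = (\<chi> k. Im (w$k))"
  have wab: "w$k = Complex (a$k) (b$k)" for k by (simp add: a_def b_def complex_eq_iff)
  have "cbil w w = Complex (a \<bullet> a - b \<bullet> b) (2 * (a \<bullet> b))"
    unfolding cbil_def wab by (simp add: sum_3 inner_vec_def complex_eq_iff power2_eq_square algebra_simps)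
  hence ab: "a \<bullet> a = b \<bullet> b" "a \<bullet> b = 0" using iso unfolding isotropic_def by (simp_all add: complex_eq_iff)
  have "a \<noteq> 0"
  proof
    assume "a = 0"
    hence "b = 0" using ab by simp
    hence "w = 0" using \<open>a = 0\<close> by (simp add: vec_eq_iff wab complex_eq_iff)
    thus False using nz by simp
  qed
  define l where "l = norm a"
  have l0: "l > 0" using \<open>a \<noteq> 0\<close> by (simp add: l_def)
  have nb: "norm b = l" unfolding l_def norm_eq_sqrt_inner ab(1) ..
  define u1 where "u1 = (1/l) *\<^sub>R a"
  define u2 where "u2 = (1/l) *\<^sub>R b"
  have o: "orthonormal2 u1 u2"
    unfolding orthonormal2_def u1_def u2_def using l0 nb ab(2) by (simp add: l_def)
  have "w = complex_of_real l *s Vc u1 u2"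
    unfolding Vc_def u1_def u2_def cvec_def using l0
    by (simp add: vec_eq_iff wab complex_eq_iff)
  thus ?thesis using o l0 by (intro exI[of _ "complex_of_real l"]) auto
qed

lemma adapted_of_orth:
  assumes "orthonormal2 u1 u2"
  shows "adapted_basis (- cross3 u1 u2) u1 u2"
  using cross_facts[OF assms] assms unfolding adapted_basis_def orthonormal2_def
  by (simp add: inner_commute)

lemma orth_of_adapted:
  assumes "adapted_basis L u1 u2"
  shows "orthonormal2 u1 u2" "L = - cross3 u1 u2"
  using assms unfolding adapted_basis_def orthonormal2_def by auto

lemma Vc_nz: "orthonormal2 u1 u2 \<Longrightarrow> Vc u1 u2 \<noteq> 0"
proof
  assume o: "orthonormal2 u1 u2" and "Vc u1 u2 = 0"
  hence "u1$k = 0" for k by (metis Vc_comp complex.sel(1) zero_complex.sel(1) zero_index)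
  hence "u1 = 0" by (simp add: vec_eq_iff)
  thus False using o by (simp add: orthonormal2_def)
qed

lemma Vc_iso: "orthonormal2 u1 u2 \<Longrightarrow> isotropic (Vc u1 u2)"
proof -
  assume o: "orthonormal2 u1 u2"
  note f = cross_facts[OF o]
  have "cbil (Vc u1 u2) (Vc u1 u2) = Complex (u1 \<bullet> u1 - u2 \<bullet> u2) (2 * (u1 \<bullet> u2))"
    unfolding cbil_def Vc_comp by (simp add: sum_3 inner_vec_def complex_eq_iff power2_eq_square algebra_simps)
  thus ?thesis unfolding isotropic_def using f by (simp add: complex_eq_iff)
qed

lemma coord_Vc:
  assumes "adapted_basis L u1 u2"
  shows "cbil (cvec p) (Vc u1 u2) = plane_coord u1 u2 (proj L p)"
proof -
  have "L \<bullet> u1 = 0" "L \<bullet> u2 = 0" using assms by (auto simp: adapted_basis_def inner_commute)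
  hence "proj L p \<bullet> u1 = p \<bullet> u1" "proj L p \<bullet> u2 = p \<bullet> u2" by (simp_all add: proj_def inner_diff_left)
  moreover have "cbil (cvec p) (Vc u1 u2) = Complex (p \<bullet> u1) (p \<bullet> u2)"
    unfolding cbil_def Vc_comp cvec_def by (simp add: sum_3 inner_vec_def complex_eq_iff)
  ultimately show ?thesis by (simp add: plane_coord_def)
qed



lemma X_eq:
  assumes "f \<in> polyfun" "\<And>t M y. M \<in> SO3 \<Longrightarrow> f (scale_pt t (iso_pt M y)) = 0" "q \<in> X_cone"
  shows "f q = 0"
  using zc_vanish[OF assms(3)[unfolded X_cone_eq] assms(1)] assms(2) unfolding Scone_def by blast

lemmas coords = polyfun.coord_h[unfolded ph_def] polyfun.coord_M[unfolded pM_def]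
        polyfun.coord_x[unfolded px_def] polyfun.coord_y[unfolded py_def] polyfun.coord_r[unfolded pr_def]

lemma sc_parts:
  "ph (scale_pt t (iso_pt M y)) = t"
  "pM (scale_pt t (iso_pt M y)) = (\<chi> i j. t * cmat M $ i $ j)"
  "px (scale_pt t (iso_pt M y)) = t *s cvec (- (transpose M *v y))"
  "py (scale_pt t (iso_pt M y)) = t *s cvec y"
  "pr (scale_pt t (iso_pt M y)) = t * complex_of_real (y \<bullet> y)"
  by (simp_all add: scale_pt_def iso_pt_def ph_def pM_def px_def py_def pr_def vec_eq_iff)

lemma smat_mv: "(\<chi> i j. t * A $ i $ j) *v v = t *s (A *v v)" for A :: "complex^3^3"
  by (simp add: vec_eq_iff matrix_vector_mult_def sum_distrib_left algebra_simps)
lemma smat_tmv: "transpose (\<chi> i j. t * A $ i $ j) *v v = t *s (transpose A *v v)" for A :: "complex^3^3"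
  by (simp add: vec_eq_iff matrix_vector_mult_def transpose_def sum_distrib_left algebra_simps)

lemma eq1:
  assumes "q \<in> X_cone"
  shows "ph q *s py q + pM q *v px q = 0"
proof -
  have "(\<lambda>v. ph v * py v $ i + (pM v *v px v) $ i) q = 0" for i
  proof (rule X_eq[OF _ _ assms])
    show "(\<lambda>v. ph v * py v $ i + (pM v *v px v) $ i) \<in> polyfun"
      unfolding ph_def pM_def px_def py_def matrix_vector_mult_def
      by (simp add: sum_3) (intro polyfun.add polyfun.mult coords)
  next
    fix t M y assume M: "M \<in> SO3"
    have o: "M ** transpose M = mat 1" using orth_MMt SO3_orth[OF M] by blast
    have "M *v (transpose M *v y) = y"
      by (simp only: matrix_vector_mul_assoc o matrix_vector_mul_lid)
    hence "y + M *v (- (transpose M *v y)) = 0"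
      by (simp only: mv_neg) simp
    hence "cvec y + cmat M *v cvec (- (transpose M *v y)) = 0"
      by (metis cvec_add cvec_mv cvec_zero)
    hence "(t *s (t *s (cvec y + cmat M *v cvec (- (transpose M *v y))))) $ i = 0" by simp
    thus "ph (scale_pt t (iso_pt M y)) * py (scale_pt t (iso_pt M y)) $ i + (pM (scale_pt t (iso_pt M y)) *v px (scale_pt t (iso_pt M y))) $ i = 0"
      unfolding sc_parts smat_mv mv_smult
      by (simp add: algebra_simps)
  qed
  thus ?thesis by (simp add: vec_eq_iff)
qed

lemma eq2:
  assumes "q \<in> X_cone"
  shows "ph q *s px q + transpose (pM q) *v py q = 0"
proof -
  have "(\<lambda>v. ph v * px v $ i + (transpose (pM v) *v py v) $ i) q = 0" for i
  proof (rule X_eq[OF _ _ assms])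
    show "(\<lambda>v. ph v * px v $ i + (transpose (pM v) *v py v) $ i) \<in> polyfun"
      unfolding ph_def pM_def px_def py_def matrix_vector_mult_def transpose_def
      by (simp add: sum_3) (intro polyfun.add polyfun.mult coords)
  next
    fix t M y assume M: "M \<in> SO3"
    have "cvec (- (transpose M *v y)) + transpose (cmat M) *v cvec y = 0"
      by (simp add: cvec_minus cvec_mv cvec_vm cmat_transpose)
    hence "(t *s (t *s (cvec (- (transpose M *v y)) + transpose (cmat M) *v cvec y))) $ i = 0" by simp
    thus "ph (scale_pt t (iso_pt M y)) * px (scale_pt t (iso_pt M y)) $ i + (transpose (pM (scale_pt t (iso_pt M y))) *v py (scale_pt t (iso_pt M y))) $ i = 0"
      unfolding sc_parts smat_tmv mv_smult
      by (simp add: algebra_simps)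
  qed
  thus ?thesis by (simp add: vec_eq_iff)
qed

lemma polyfun_cbil: "(\<lambda>v. cbil (f v) (g v)) \<in> polyfun" if "\<And>i. (\<lambda>v. f v $ i) \<in> polyfun" "\<And>i. (\<lambda>v. g v $ i) \<in> polyfun"
  unfolding cbil_def sum_3 by (intro polyfun.add polyfun.mult that)

lemma eq3:
  assumes "q \<in> X_cone"
  shows "cbil (px q) (px q) - ph q * pr q = 0"
proof (rule X_eq[where f = "\<lambda>v. cbil (px v) (px v) - ph v * pr v", OF _ _ assms])
  show "(\<lambda>v. cbil (px v) (px v) - ph v * pr v) \<in> polyfun"
    using polyfun.add[OF polyfun_cbil[of px px] polyfun.mult[OF polyfun.mult[OF polyfun.const[of "-1"] polyfun.coord_h] polyfun.coord_r]]
    by (simp add: polyfun.coord_x)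
next
  fix t M y assume M: "M \<in> SO3"
  have o: "transpose (transpose M) ** transpose M = mat 1" using orth_MMt SO3_orth[OF M] by simp
  have n: "(transpose M *v y) \<bullet> (transpose M *v y) = y \<bullet> y" using orth_norm[OF o] .
  show "cbil (px (scale_pt t (iso_pt M y))) (px (scale_pt t (iso_pt M y))) - ph (scale_pt t (iso_pt M y)) * pr (scale_pt t (iso_pt M y)) = 0"
    unfolding sc_parts by (simp add: cbil_scale_left cbil_scale_right cbil_cvec n[simplified] cvec_minus cbil_minus_left cbil_minus_right)
qed

lemma eq4:
  assumes "q \<in> X_cone"
  shows "cbil (py q) (py q) - ph q * pr q = 0"
proof (rule X_eq[where f = "\<lambda>v. cbil (py v) (py v) - ph v * pr v", OF _ _ assms])
  show "(\<lambda>v. cbil (py v) (py v) - ph v * pr v) \<in> polyfun"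
    using polyfun.add[OF polyfun_cbil[of py py] polyfun.mult[OF polyfun.mult[OF polyfun.const[of "-1"] polyfun.coord_h] polyfun.coord_r]]
    by (simp add: polyfun.coord_y)
next
  fix t M y assume M: "M \<in> SO3"
  show "cbil (py (scale_pt t (iso_pt M y))) (py (scale_pt t (iso_pt M y))) - ph (scale_pt t (iso_pt M y)) * pr (scale_pt t (iso_pt M y)) = 0"
    unfolding sc_parts by (simp add: cbil_scale_left cbil_scale_right cbil_cvec)
qed



definition ccross :: "complex^3 \<Rightarrow> complex^3 \<Rightarrow> complex^3" where
  "ccross a b = vector [a$2*b$3 - a$3*b$2, a$3*b$1 - a$1*b$3, a$1*b$2 - a$2*b$1]"

lemma ccross_triple: "ccross a (ccross b c) = cbil a c *s b - cbil a b *s c"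
  unfolding ccross_def cbil_def sum_3 vec_eq_iff forall_3 vector_3 vector_smult_component vector_minus_component
  by (simp add: algebra_simps)

lemma ccross_triple2: "ccross (ccross a b) c = cbil a c *s b - cbil b c *s a"
  unfolding ccross_def cbil_def sum_3 vec_eq_iff forall_3 vector_3 vector_smult_component vector_minus_component
  by (simp add: algebra_simps)

lemma ccross_smult: "ccross (k *s a) b = k *s ccross a b"
  by (simp add: ccross_def vec_eq_iff forall_3 algebra_simps)

lemma ccross_self: "ccross a a = 0"
  by (simp add: ccross_def vec_eq_iff forall_3 algebra_simps)

lemma ccross_zero:
  assumes "w \<noteq> 0" "ccross w x = 0"
  shows "\<exists>a. x = a *s w"
proof -
  have "ccross w x $ 1 = 0" "ccross w x $ 2 = 0" "ccross w x $ 3 = 0" using assms(2) by simp_all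
  hence c: "w$2*x$3 = w$3*x$2" "w$3*x$1 = w$1*x$3" "w$1*x$2 = w$2*x$1"
    unfolding ccross_def vector_3 by simp_all
  obtain k where k: "w$k \<noteq> 0" using assms(1) by (auto simp: vec_eq_iff)
  have cr: "x$j * w$k = x$k * w$j" for j
  proof -
    have "j = 1 \<or> j = 2 \<or> j = 3" "k = 1 \<or> k = 2 \<or> k = 3" using exhaust_3[of j] exhaust_3[of k] by simp_all
    thus ?thesis using c by (elim disjE) (simp_all add: mult.commute)
  qed
  have all: "\<forall>j. x$j = x$k / w$k * w$j"
  proof
    fix j
    have "x$k / w$k * w$j = (x$k * w$j) / w$k" by simp
    also have "\<dots> = (x$j * w$k) / w$k" by (simp only: cr)
    also have "\<dots> = x$j" using k by simp
    finally show "x$j = x$k / w$k * w$j" by simp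
  qed
  have "x = (x$k / w$k) *s w" unfolding vec_eq_iff vector_smult_component using all by blast
  thus ?thesis by blast
qed

lemma span_iso:
  assumes "w \<noteq> 0" "cbil w w = 0" "cbil w x = 0" "cbil x x = 0"
  shows "\<exists>a. x = a *s w"
proof -
  define k where "k = ccross w x"
  have "ccross w k = 0" unfolding k_def ccross_triple using assms by simp
  then obtain c where c: "k = c *s w" using ccross_zero[OF assms(1)] by blast
  have "ccross k x = 0" unfolding k_def ccross_triple2 using assms by (simp add: cbil_comm)
  hence "c *s k = 0" unfolding c ccross_smult by (simp add: k_def[symmetric] c)
  hence "(c * c) *s w = 0" unfolding c by (simp add: vector_smult_assoc)
  hence "c = 0" using assms(1) by (auto simp: vec_eq_iff)
  hence "ccross w x = 0" using c k_def by simp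
  thus ?thesis using ccross_zero[OF assms(1)] by blast
qed



lemma lform_h0: "ph v = 0 \<Longrightarrow> lform p P d v = pr v - 2*cbil (cvec p) (px v) - 2*cbil (py v) (cvec P) - 2*cbil (pM v *v cvec p) (cvec P)"
  by (simp add: lform_def)

lemma outer_mv: "outer v w *v x = cbil w x *s v"
  by (simp add: outer_def cbil_def vec_eq_iff matrix_vector_mult_def sum_distrib_left algebra_simps)

lemma outer_tmv: "transpose (outer v w) *v y = cbil v y *s w"
  by (simp add: outer_def cbil_def vec_eq_iff matrix_vector_mult_def transpose_def sum_distrib_left algebra_simps)

lemma smult_eq0: "v \<noteq> 0 \<Longrightarrow> c *s v = 0 \<Longrightarrow> c = (0::complex)"
  by (auto simp: vec_eq_iff)

lemma mob_alg:
  fixes l m a b r z Z :: complex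
  assumes "l \<noteq> 0" "m \<noteq> 0" "r + 2*a*b \<noteq> 0" "r - 2*a*(l*z) - 2*b*(m*Z) - 2*(l*z)*(m*Z) = 0"
  shows "z \<noteq> -b/l" "((r/2+a*b)/(l*m))/(z - (-b/l)) + (-a/m) = Z"
proof -
  have e: "(m*Z + a)*(l*z + b) = r/2 + a*b" using assms(4) by (simp add: algebra_simps)
  have C: "r/2 + a*b \<noteq> 0" using assms(3) by (simp add: field_simps)
  have nz: "l*z + b \<noteq> 0" using e C by auto
  thus "z \<noteq> -b/l" using assms(1) by (auto simp: field_simps)
  have "z - (-b/l) = (l*z + b)/l" using assms(1) by (simp add: field_simps)
  hence "((r/2+a*b)/(l*m))/(z - (-b/l)) = ((r/2+a*b)/(l*m)) * (l/(l*z+b))" by simp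
  also have "\<dots> = (r/2+a*b)/(m*(l*z+b))" using assms(1,2) nz by simp
  also have "\<dots> = (m*Z + a)/m" unfolding e[symmetric] using nz by simp
  finally show "((r/2+a*b)/(l*m))/(z - (-b/l)) + (-a/m) = Z" using assms(2) by (simp add: field_simps)
qed

lemma part1_inv:
  assumes bond: "is_bond n p P d \<beta>" and ip: "inversion_point \<beta>" and lr: "inv_LR \<beta> L R v w"
  shows "has_inversion L R n (\<lambda>i. proj L (p i)) (\<lambda>i. proj R (P i))"
proof -
  have X: "\<beta> \<in> X_cone" and h0: "ph \<beta> = 0" and l0: "\<forall>i<n. lform (p i) (P i) (d i) \<beta> = 0"
    using bond unfolding is_bond_def in_boundary_def inX_def by auto
  have vnz: "v \<noteq> 0" and wnz: "w \<noteq> 0" and iv: "isotropic v" and iw: "isotropic w" and M: "pM \<beta> = outer v w"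
    and L: "L = Smap w" and R: "R = Smap v" using lr unfolding inv_LR_def by auto
  have "cbil w (px \<beta>) *s v = 0" using eq1[OF X] h0 M outer_mv by simp
  hence wx: "cbil w (px \<beta>) = 0" using smult_eq0[OF vnz] by blast
  have xx: "cbil (px \<beta>) (px \<beta>) = 0" using eq3[OF X] h0 by simp
  obtain a where a: "px \<beta> = a *s w" using span_iso[OF wnz iw[unfolded isotropic_def] wx xx] by blast
  have "cbil v (py \<beta>) *s w = 0" using eq2[OF X] h0 M outer_tmv by simp
  hence vy: "cbil v (py \<beta>) = 0" using smult_eq0[OF wnz] by blast
  have yy: "cbil (py \<beta>) (py \<beta>) = 0" using eq4[OF X] h0 by simp
  obtain b where b: "py \<beta> = b *s v" using span_iso[OF vnz iv[unfolded isotropic_def] vy yy] by blast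
  define r where "r = pr \<beta>"
  have "Nmat \<beta> = (\<chi> i j. (r + 2*a*b) * outer v w $ i $ j)"
    unfolding Nmat_def M a b r_def by (simp add: outer_def vec_eq_iff algebra_simps)
  hence rab: "r + 2*a*b \<noteq> 0" using ip unfolding inversion_point_def by (auto simp: vec_eq_iff)
  obtain l u1 u2 where lw: "l \<noteq> 0" "orthonormal2 u1 u2" "w = l *s Vc u1 u2" using iso_decomp[OF iw wnz] by blast
  obtain m U1 U2 where mv: "m \<noteq> 0" "orthonormal2 U1 U2" "v = m *s Vc U1 U2" using iso_decomp[OF iv vnz] by blast
  have L': "L = - cross3 u1 u2" unfolding L lw(3) Smap_scale[OF lw(1)] Smap_Vc[OF lw(2)] ..
  have R': "R = - cross3 U1 U2" unfolding R mv(3) Smap_scale[OF mv(1)] Smap_Vc[OF mv(2)] ..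
  have aL: "adapted_basis L u1 u2" unfolding L' by (rule adapted_of_orth[OF lw(2)])
  have aR: "adapted_basis R U1 U2" unfolding R' by (rule adapted_of_orth[OF mv(2)])
  show ?thesis unfolding has_inversion_def
  proof (intro exI conjI allI impI)
    show "adapted_basis L u1 u2" "adapted_basis R U1 U2" by fact+
    show "(r/2+a*b)/(l*m) \<noteq> 0" using rab lw(1) mv(1) by (simp add: field_simps)
    fix i assume i: "i < n"
    define z where "z = plane_coord u1 u2 (proj L (p i))"
    define Z where "Z = plane_coord U1 U2 (proj R (P i))"
    have zc: "cbil (cvec (p i)) (Vc u1 u2) = z" unfolding z_def by (rule coord_Vc[OF aL])
    have Zc: "cbil (cvec (P i)) (Vc U1 U2) = Z" unfolding Z_def by (rule coord_Vc[OF aR])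
    have "lform (p i) (P i) (d i) \<beta> = 0" using l0 i by blast
    hence "r - 2*a*(l*z) - 2*b*(m*Z) - 2*(l*z)*(m*Z) = 0"
      unfolding lform_h0[OF h0] M outer_mv a b lw(3) mv(3) r_def[symmetric]
      by (simp add: cbil_scale_left cbil_scale_right zc Zc cbil_comm[of _ "cvec (p i)"] cbil_comm[of _ "cvec (P i)"]
            algebra_simps)
    note mm = mob_alg[OF lw(1) mv(1) rab this]
    show "plane_coord u1 u2 (proj L (p i)) \<noteq> -b/l" using mm(1) z_def by simp
    show "(r/2+a*b)/(l*m) / (plane_coord u1 u2 (proj L (p i)) - -b/l) + -a/m = plane_coord U1 U2 (proj R (P i))"
      using mm(2) z_def Z_def by simp
  qed
qed

lemma part1_sim:
  assumes bond: "is_bond n p P d \<beta>" and sp: "similarity_point \<beta>"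
  shows "has_similarity (sim_L \<beta>) (sim_R \<beta>) n (\<lambda>i. proj (sim_L \<beta>) (p i)) (\<lambda>i. proj (sim_R \<beta>) (P i))"
proof -
  have X: "\<beta> \<in> X_cone" and h0: "ph \<beta> = 0" and l0: "\<forall>i<n. lform (p i) (P i) (d i) \<beta> = 0"
    using bond unfolding is_bond_def in_boundary_def inX_def by auto
  have M: "pM \<beta> = 0" and xnz: "px \<beta> \<noteq> 0" and ynz: "py \<beta> \<noteq> 0" using sp unfolding similarity_point_def by auto
  have ix: "isotropic (px \<beta>)" using eq3[OF X] h0 by (simp add: isotropic_def)
  have iy: "isotropic (py \<beta>)" using eq4[OF X] h0 by (simp add: isotropic_def)
  obtain l u1 u2 where lw: "l \<noteq> 0" "orthonormal2 u1 u2" "px \<beta> = l *s Vc u1 u2" using iso_decomp[OF ix xnz] by blast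
  obtain m U1 U2 where mv: "m \<noteq> 0" "orthonormal2 U1 U2" "py \<beta> = m *s Vc U1 U2" using iso_decomp[OF iy ynz] by blast
  define L where "L = sim_L \<beta>"
  define R where "R = sim_R \<beta>"
  have L': "L = - cross3 u1 u2" unfolding L_def sim_L_def lw(3) Smap_scale[OF lw(1)] Smap_Vc[OF lw(2)] ..
  have R': "R = - cross3 U1 U2" unfolding R_def sim_R_def mv(3) Smap_scale[OF mv(1)] Smap_Vc[OF mv(2)] ..
  have aL: "adapted_basis L u1 u2" unfolding L' by (rule adapted_of_orth[OF lw(2)])
  have aR: "adapted_basis R U1 U2" unfolding R' by (rule adapted_of_orth[OF mv(2)])
  define r where "r = pr \<beta>"
  have "has_similarity L R n (\<lambda>i. proj L (p i)) (\<lambda>i. proj R (P i))"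
    unfolding has_similarity_def
  proof (intro exI conjI allI impI)
    show "adapted_basis L u1 u2" "adapted_basis R U1 U2" by fact+
    show "- l / m \<noteq> 0" using lw(1) mv(1) by simp
    fix i assume i: "i < n"
    have zc: "cbil (cvec (p i)) (Vc u1 u2) = plane_coord u1 u2 (proj L (p i))" by (rule coord_Vc[OF aL])
    have Zc: "cbil (cvec (P i)) (Vc U1 U2) = plane_coord U1 U2 (proj R (P i))" by (rule coord_Vc[OF aR])
    have "lform (p i) (P i) (d i) \<beta> = 0" using l0 i by blast
    hence "r - 2*l*plane_coord u1 u2 (proj L (p i)) - 2*m*plane_coord U1 U2 (proj R (P i)) = 0"
      unfolding lform_h0[OF h0] M lw(3) mv(3) r_def[symmetric]
      by (simp add: cbil_scale_left cbil_scale_right zc[symmetric] Zc[symmetric] cbil_comm[of _ "cvec (P i)"] mult.assoc)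
    thus "- l / m * plane_coord u1 u2 (proj L (p i)) + r / (2*m) = plane_coord U1 U2 (proj R (P i))"
      using mv(1) by (simp add: field_simps)
  qed
  thus ?thesis unfolding L_def R_def .
qed

lemma part2_inv:
  assumes "has_inversion L R n (\<lambda>i. proj L (p i)) (\<lambda>i. proj R (P i))"
  shows "\<exists>\<beta> v w. is_bond n p P d \<beta> \<and> inversion_point \<beta> \<and> inv_LR \<beta> L R v w"
proof -
  obtain u1 u2 U1 U2 \<alpha> z0 w0' where aL: "adapted_basis L u1 u2" and aR: "adapted_basis R U1 U2" and a0: "\<alpha> \<noteq> 0"
    and mob: "\<forall>i<n. plane_coord u1 u2 (proj L (p i)) \<noteq> z0 \<and>
               \<alpha> / (plane_coord u1 u2 (proj L (p i)) - z0) + w0' = plane_coord U1 U2 (proj R (P i))"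
    using assms unfolding has_inversion_def by blast
  note oL = orth_of_adapted[OF aL] and oR = orth_of_adapted[OF aR]
  define W where "W = Vc u1 u2"
  define V where "V = Vc U1 U2"
  define \<beta> where "\<beta> = ((0::complex), outer V W, (-w0') *s W, (-z0) *s V, 2*\<alpha> + 2*(-z0)*w0')"
  have X: "\<beta> \<in> X_cone" unfolding \<beta>_def V_def W_def by (rule inv_X[OF oL(1) oR(1)])
  have Wnz: "W \<noteq> 0" and Vnz: "V \<noteq> 0" unfolding W_def V_def using Vc_nz oL(1) oR(1) by auto
  have outer_nz: "outer V W \<noteq> 0"
  proof
    assume "outer V W = 0"
    obtain i where "V$i \<noteq> 0" using Vnz by (auto simp: vec_eq_iff)
    moreover obtain j where "W$j \<noteq> 0" using Wnz by (auto simp: vec_eq_iff)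
    moreover have "outer V W $ i $ j = 0" using \<open>outer V W = 0\<close> by simp
    ultimately show False by (simp add: outer_def)
  qed
  have h0: "ph \<beta> = 0" by (simp add: \<beta>_def ph_def)
  have bz: "\<beta> \<noteq> 0" using outer_nz by (simp add: \<beta>_def zero_prod_def)
  have bond: "is_bond n p P d \<beta>"
    unfolding is_bond_def in_boundary_def inX_def
  proof (intro conjI allI impI)
    show "\<beta> \<noteq> 0" "\<beta> \<in> X_cone" "ph \<beta> = 0" by fact+
    fix i assume i: "i < n"
    define z where "z = plane_coord u1 u2 (proj L (p i))"
    define Z where "Z = plane_coord U1 U2 (proj R (P i))"
    have zc: "cbil (cvec (p i)) W = z" unfolding z_def W_def by (rule coord_Vc[OF aL])
    have Zc: "cbil (cvec (P i)) V = Z" unfolding Z_def V_def by (rule coord_Vc[OF aR])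
    have m: "z \<noteq> z0" "\<alpha> / (z - z0) + w0' = Z" using mob i z_def Z_def by auto
    hence e: "(Z - w0') * (z - z0) = \<alpha>" by (simp add: field_simps)
    have "lform (p i) (P i) (d i) \<beta> = 2*\<alpha> + 2*(-z0)*w0' + 2*w0'*z + 2*z0*Z - 2*z*Z"
      unfolding lform_h0[OF h0] unfolding \<beta>_def pr_def px_def py_def pM_def fst_conv snd_conv outer_mv
      by (simp add: cbil_scale_left cbil_scale_right cbil_minus_left cbil_minus_right zc Zc
          cbil_comm[of W] cbil_comm[of V] algebra_simps)
    also have "\<dots> = 2*(\<alpha> - (Z - w0') * (z - z0))" by (simp add: algebra_simps)
    also have "\<dots> = 0" using e by simp
    finally show "lform (p i) (P i) (d i) \<beta> = 0" .
  qed
  have "Nmat \<beta> = (\<chi> i j. (2*\<alpha>) * outer V W $ i $ j)"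
    unfolding Nmat_def \<beta>_def pr_def px_def py_def pM_def fst_conv snd_conv
    by (simp add: outer_def vec_eq_iff algebra_simps)
  hence "Nmat \<beta> \<noteq> 0" using outer_nz a0 by (auto simp: vec_eq_iff)
  hence ip: "inversion_point \<beta>"
    unfolding inversion_point_def using bond outer_nz by (simp add: is_bond_def \<beta>_def pM_def)
  have "inv_LR \<beta> L R V W"
    unfolding inv_LR_def using Vnz Wnz Vc_iso[OF oL(1)] Vc_iso[OF oR(1)]
      Smap_Vc[OF oL(1)] Smap_Vc[OF oR(1)] oL(2) oR(2)
    by (simp add: \<beta>_def pM_def V_def W_def)
  thus ?thesis using bond ip by blast
qed

lemma part2_sim:
  assumes "has_similarity L R n (\<lambda>i. proj L (p i)) (\<lambda>i. proj R (P i))"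
  shows "\<exists>\<beta>. is_bond n p P d \<beta> \<and> similarity_point \<beta> \<and> sim_L \<beta> = L \<and> sim_R \<beta> = R"
proof -
  obtain u1 u2 U1 U2 \<alpha> \<gamma> where aL: "adapted_basis L u1 u2" and aR: "adapted_basis R U1 U2" and a0: "\<alpha> \<noteq> 0"
    and sim: "\<forall>i<n. \<alpha> * plane_coord u1 u2 (proj L (p i)) + \<gamma> = plane_coord U1 U2 (proj R (P i))"
    using assms unfolding has_similarity_def by blast
  note oL = orth_of_adapted[OF aL] and oR = orth_of_adapted[OF aR]
  define W where "W = Vc u1 u2"
  define V where "V = Vc U1 U2"
  define \<beta> where "\<beta> = ((0::complex), (0::complex^3^3), (-\<alpha>) *s W, 1 *s V, 2*\<gamma>)"
  have X: "\<beta> \<in> X_cone" unfolding \<beta>_def V_def W_def by (rule sim_X[OF oL(1) oR(1)])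
  have Wnz: "W \<noteq> 0" and Vnz: "V \<noteq> 0" unfolding W_def V_def using Vc_nz oL(1) oR(1) by auto
  have xnz: "(-\<alpha>) *s W \<noteq> 0" using Wnz a0 by (auto simp: vec_eq_iff)
  have h0: "ph \<beta> = 0" by (simp add: \<beta>_def ph_def)
  have bz: "\<beta> \<noteq> 0" using xnz by (simp add: \<beta>_def zero_prod_def)
  have bond: "is_bond n p P d \<beta>"
    unfolding is_bond_def in_boundary_def inX_def
  proof (intro conjI allI impI)
    show "\<beta> \<noteq> 0" "\<beta> \<in> X_cone" "ph \<beta> = 0" by fact+
    fix i assume i: "i < n"
    define z where "z = plane_coord u1 u2 (proj L (p i))"
    define Z where "Z = plane_coord U1 U2 (proj R (P i))"
    have zc: "cbil (cvec (p i)) W = z" unfolding z_def W_def by (rule coord_Vc[OF aL])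
    have Zc: "cbil (cvec (P i)) V = Z" unfolding Z_def V_def by (rule coord_Vc[OF aR])
    have e: "\<alpha> * z + \<gamma> = Z" using sim i z_def Z_def by auto
    have "lform (p i) (P i) (d i) \<beta> = 2*\<gamma> + 2*\<alpha>*z - 2*Z"
      unfolding lform_h0[OF h0] unfolding \<beta>_def pr_def px_def py_def pM_def fst_conv snd_conv
      by (simp add: cbil_scale_left cbil_scale_right cbil_minus_left cbil_minus_right zc Zc
          cbil_comm[of V] algebra_simps)
    also have "\<dots> = 2*(\<alpha> * z + \<gamma> - Z)" by (simp add: algebra_simps)
    also have "\<dots> = 0" using e by simp
    finally show "lform (p i) (P i) (d i) \<beta> = 0" .
  qed
  have sp: "similarity_point \<beta>"
    unfolding similarity_point_def using bond xnz Vnz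
    by (simp add: is_bond_def \<beta>_def pM_def px_def py_def)
  have "sim_L \<beta> = L" unfolding sim_L_def \<beta>_def px_def fst_conv snd_conv
    using Smap_scale[of "-\<alpha>" W] a0 Smap_Vc[OF oL(1)] oL(2) W_def by simp
  moreover have "sim_R \<beta> = R" unfolding sim_R_def \<beta>_def py_def fst_conv snd_conv
    using Smap_scale[of 1 V] Smap_Vc[OF oR(1)] oR(2) V_def by simp
  ultimately show ?thesis using bond sp by blast
qed

theorem mainTheorem3:
  fixes n :: nat and p P :: "nat \<Rightarrow> real^3" and d :: "nat \<Rightarrow> real"
  assumes "\<forall>i<n. d i \<ge> 0"
  shows
    "(\<forall>\<beta> v w L R. is_bond n p P d \<beta> \<and> inversion_point \<beta> \<and> inv_LR \<beta> L R v w \<longrightarrow>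
        has_inversion L R n (\<lambda>i. proj L (p i)) (\<lambda>i. proj R (P i)))
   \<and> (\<forall>\<beta>. is_bond n p P d \<beta> \<and> similarity_point \<beta> \<longrightarrow>
        has_similarity (sim_L \<beta>) (sim_R \<beta>) n (\<lambda>i. proj (sim_L \<beta>) (p i)) (\<lambda>i. proj (sim_R \<beta>) (P i)))
   \<and> (\<forall>L R. L \<in> S2 \<and> R \<in> S2 \<and> has_inversion L R n (\<lambda>i. proj L (p i)) (\<lambda>i. proj R (P i)) \<longrightarrow>
        (\<exists>\<beta> v w. is_bond n p P d \<beta> \<and> inversion_point \<beta> \<and> inv_LR \<beta> L R v w))
   \<and> (\<forall>L R. L \<in> S2 \<and> R \<in> S2 \<and> has_similarity L R n (\<lambda>i. proj L (p i)) (\<lambda>i. proj R (P i)) \<longrightarrow>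
        (\<exists>\<beta>. is_bond n p P d \<beta> \<and> similarity_point \<beta> \<and> sim_L \<beta> = L \<and> sim_R \<beta> = R))"
proof (intro conjI allI impI)
  fix \<beta> v w L R assume "is_bond n p P d \<beta> \<and> inversion_point \<beta> \<and> inv_LR \<beta> L R v w"
  thus "has_inversion L R n (\<lambda>i. proj L (p i)) (\<lambda>i. proj R (P i))" using part1_inv by blast
next
  fix \<beta> assume "is_bond n p P d \<beta> \<and> similarity_point \<beta>"
  thus "has_similarity (sim_L \<beta>) (sim_R \<beta>) n (\<lambda>i. proj (sim_L \<beta>) (p i)) (\<lambda>i. proj (sim_R \<beta>) (P i))"
    using part1_sim by blast
next
  fix L R assume "L \<in> S2 \<and> R \<in> S2 \<and> has_inversion L R n (\<lambda>i. proj L (p i)) (\<lambda>i. proj R (P i))"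
  thus "\<exists>\<beta> v w. is_bond n p P d \<beta> \<and> inversion_point \<beta> \<and> inv_LR \<beta> L R v w"
    using part2_inv by blast
next
  fix L R assume "L \<in> S2 \<and> R \<in> S2 \<and> has_similarity L R n (\<lambda>i. proj L (p i)) (\<lambda>i. proj R (P i))"
  thus "\<exists>\<beta>. is_bond n p P d \<beta> \<and> similarity_point \<beta> \<and> sim_L \<beta> = L \<and> sim_R \<beta> = R"
    using part2_sim by blast
qed


end
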